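(* Let $d\ge1$. There exist finitely many topologically closed connected subgroups $T_1,\dots,T_m$ of $\mathbb{T}^{2d}$, each satisfying $\dim\pi(T_j)<d$, and torsion points $p_1,\dots,p_m\in\mathbb{T}^{2d}_{\mathrm{tors}}$, such that $$\mathbb{T}^{2d}_{\mathrm{tors}}\cap V=\bigcup_{\sigma\in S_d}\bigl(\mathbb{T}^{2d}_{\mathrm{tors}}\cap T_\sigma\bigr)\ \cup\ \bigcup_{j=1}^m\bigl(\mathbb{T}^{2d}_{\mathrm{tors}}\cap p_j\cdot T_j\bigr).$$
   Context: $\mathbb{T}^k=\{z\in\mathbb{C}^k:|z_1|=\dots=|z_k|=1\}$ is the $k$-torus, a compact abelian Lie group under coordinatewise multiplication $z\cdot w=(z_1w_1,\dots,z_kw_k)$; $\mathbb{T}^k_{\mathrm{tors}}$ is its set of points of finite order. $V=\{z\in\mathbb{C}^{2d}:\sum_{j=1}^d z_j-\sum_{j=d+1}^{2d}z_j=0\}$. $\pi:\mathbb{T}^{2d}=\mathbb{T}^d\times\mathbb{T}^d\to\mathbb{T}^d$ is the projection $(z,w)\mapsto z$ onto the first $d$ coordinates, and $\dim$ denotes dimension as a Lie group. For a permutation $\sigma$ in the symmetric group $S_d$, $T_\sigma=\{(z_1,\dots,z_d,z_{\sigma(1)},\dots,z_{\sigma(d)}):|z_j|=1\}\subset\mathbb{T}^{2d}$. *)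

theory Defs
  imports "HOL-Analysis.Analysis"
begin

definition torus :: "(complex^'n) set" where
  "torus = {z. \<forall>j. cmod (z$j) = 1}"

definition torus2 :: "((complex^'n) \<times> (complex^'n)) set" where
  "torus2 = torus \<times> torus"

definition mult2 :: "(complex^'n) \<times> (complex^'n) \<Rightarrow> (complex^'n) \<times> (complex^'n) \<Rightarrow> (complex^'n) \<times> (complex^'n)" where
  "mult2 a b = ((\<chi> j. fst a $ j * fst b $ j), (\<chi> j. snd a $ j * snd b $ j))"

definition inv2 :: "(complex^'n) \<times> (complex^'n) \<Rightarrow> (complex^'n) \<times> (complex^'n)" where
  "inv2 a = ((\<chi> j. inverse (fst a $ j)), (\<chi> j. inverse (snd a $ j)))"

definition one2 :: "(complex^'n) \<times> (complex^'n)" where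
  "one2 = ((\<chi> j. 1), (\<chi> j. 1))"

definition tors2 :: "((complex^'n) \<times> (complex^'n)) set" where
  "tors2 = {p \<in> torus2. \<exists>n::nat. n > 0 \<and> (\<forall>j. (fst p $ j) ^ n = 1 \<and> (snd p $ j) ^ n = 1)}"

definition closed_connected_subgroup2 :: "((complex^'n) \<times> (complex^'n)) set \<Rightarrow> bool" where
  "closed_connected_subgroup2 H \<longleftrightarrow>
     H \<subseteq> torus2 \<and> one2 \<in> H \<and>
     (\<forall>a\<in>H. \<forall>b\<in>H. mult2 a b \<in> H) \<and> (\<forall>a\<in>H. inv2 a \<in> H) \<and>
     closed H \<and> connected H"

text \<open>Lie group dimension of a closed subgroup S of T^n: the dimension of its Lie algebra
  {v in R^n. exp(t v) in S for all real t}, where exp(v) = (e^{2 pi i v_j})_j.\<close>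
definition lie_dim :: "(complex^'n) set \<Rightarrow> nat" where
  "lie_dim S = dim {v :: real^'n. \<forall>t::real.
      (\<chi> j. exp (2 * complex_of_real pi * \<i> * complex_of_real (t * v$j))) \<in> S}"

definition Vset :: "((complex^'n) \<times> (complex^'n)) set" where
  "Vset = {p. (\<Sum>j\<in>UNIV. fst p $ j) - (\<Sum>j\<in>UNIV. snd p $ j) = 0}"

definition Tperm :: "('n \<Rightarrow> 'n) \<Rightarrow> ((complex^'n) \<times> (complex^'n)) set" where
  "Tperm \<sigma> = {(z, \<chi> j. z $ (\<sigma> j)) | z. z \<in> torus}"

definition coset2 :: "(complex^'n) \<times> (complex^'n) \<Rightarrow> ((complex^'n) \<times> (complex^'n)) set \<Rightarrow> ((complex^'n) \<times> (complex^'n)) set" where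
  "coset2 p H = mult2 p ` H"

end

theory Submission
  imports Defs "HOL-Computational_Algebra.Polynomial"
begin
definition ev :: "int poly \<Rightarrow> complex \<Rightarrow> complex" where "ev f z = poly (map_poly of_int f) z"
lemma mp_add: "map_poly (of_int::int\<Rightarrow>complex) (f+g) = map_poly of_int f + map_poly of_int g"
  by (intro poly_eqI) (simp add: coeff_map_poly)
lemma mp_diff: "map_poly (of_int::int\<Rightarrow>complex) (f-g) = map_poly of_int f - map_poly of_int g"
  by (intro poly_eqI) (simp add: coeff_map_poly)
lemma mp_mult: "map_poly (of_int::int\<Rightarrow>complex) (f*g) = map_poly of_int f * map_poly of_int g"
  by (intro poly_eqI) (simp add: coeff_map_poly coeff_mult)
lemma ev_0[simp]: "ev 0 z = 0" unfolding ev_def by simp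
lemma ev_add[simp]: "ev (f + g) z = ev f z + ev g z" unfolding ev_def by (simp add: mp_add)
lemma ev_mult[simp]: "ev (f * g) z = ev f z * ev g z" unfolding ev_def by (simp add: mp_mult)
lemma ev_diff[simp]: "ev (f - g) z = ev f z - ev g z" unfolding ev_def by (simp add: mp_diff)
lemma ev_smult[simp]: "ev (smult c f) z = of_int c * ev f z" unfolding ev_def by (simp add: map_poly_smult)
lemma ev_pCons[simp]: "ev (pCons a f) z = of_int a + z * ev f z" unfolding ev_def by (simp add: map_poly_pCons)
lemma ev_monom[simp]: "ev (monom a n) z = of_int a * z ^ n" unfolding ev_def by (simp add: map_poly_monom poly_monom)
lemma ev_const: "ev [:a:] z = of_int a" by simp
lemma ev_1[simp]: "ev 1 z = 1" unfolding ev_def by simp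
lemma ev_power[simp]: "ev (f ^ n) z = ev f z ^ n" by (induct n) auto
lemma ev_sum[simp]: "ev (sum g A) z = (\<Sum>a\<in>A. ev (g a) z)" by (induct A rule: infinite_finite_induct) auto

lemma freshman_id:
  fixes x y :: "'a::comm_ring_1"
  assumes q: "prime q"
  shows "(x+y)^q = x^q + y^q + of_nat q * (\<Sum>k\<in>{1..<q}. of_nat ((q choose k) div q) * x^k * y^(q-k))"
proof -
  have q1: "q \<ge> 2" using q prime_ge_2_nat by blast
  have "(x+y)^q = (\<Sum>k\<le>q. of_nat (q choose k) * x^k * y^(q-k))" by (rule binomial_ring)
  also have "{..q} = insert 0 (insert q {1..<q})" using q1 by auto
  also have "(\<Sum>k\<in>insert 0 (insert q {1..<q}). of_nat (q choose k) * x^k * y^(q-k))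
     = y^q + (x^q + (\<Sum>k\<in>{1..<q}. of_nat (q choose k) * x^k * y^(q-k)))"
    using q1 by (subst sum.insert; simp)+
  also have "(\<Sum>k\<in>{1..<q}. of_nat (q choose k) * x^k * y^(q-k)) = 
    (\<Sum>k\<in>{1..<q}. of_nat q * (of_nat ((q choose k) div q) * x^k * y^(q-k)))"
  proof (intro sum.cong refl)
    fix k assume "k \<in> {1..<q}"
    then have "q dvd (q choose k)" using dvd_choose_prime[of k q] q by auto
    then have "(q choose k) = q * ((q choose k) div q)" by simp
    then have "(of_nat (q choose k)::'a) = of_nat q * of_nat ((q choose k) div q)"
      by (metis of_nat_mult)
    then show "of_nat (q choose k) * x^k * y^(q-k) = of_nat q * (of_nat ((q choose k) div q) * x^k * y^(q-k))"
      by (simp add: mult.assoc)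
  qed
  finally show ?thesis by (simp add: sum_distrib_left algebra_simps)
qed

lemma fermat_nat_aux:
  assumes q: "prime q"
  shows "int q dvd int n ^ q - int n"
proof (induct n)
  case 0 then show ?case using q prime_gt_0_nat by (simp add: power_0_left)
next
  case (Suc n)
  let ?S = "(\<Sum>k\<in>{1..<q}. of_nat ((q choose k) div q) * (int n)^k * 1^(q-k))"
  have eq: "(int n + 1)^q = int n ^ q + 1^q + of_nat q * ?S" by (rule freshman_id[OF q])
  have h: "int (Suc n) = int n + 1" by simp
  have "int (Suc n) ^ q - int (Suc n) = (int n ^ q - int n) + int q * ?S" unfolding h using eq by simp
  then show ?case by (simp only:) (rule dvd_add[OF Suc], simp)
qed

lemma fermat_int:
  assumes q: "prime q"
  shows "int q dvd a ^ q - a"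
proof -
  have qp: "int q > 0" using q prime_gt_0_nat by simp
  define r where "r = a mod int q"
  have r0: "r \<ge> 0" using qp r_def by simp
  have "int q dvd int (nat r) ^ q - int (nat r)" by (rule fermat_nat_aux[OF q])
  then have 1: "int q dvd r ^ q - r" using r0 by simp
  have "(a ^ q) mod int q = (r ^ q) mod int q" unfolding r_def by (simp add: power_mod)
  then have 2: "int q dvd a^q - r^q" by (simp add: mod_eq_dvd_iff)
  have 3: "int q dvd r - a" unfolding r_def by (metis mod_eq_dvd_iff mod_mod_trivial)
  have "a^q - a = (a^q - r^q) + (r^q - r) + (r - a)" by simp
  then show ?thesis using 1 2 3 by (metis dvd_add)
qed

definition Rg :: "complex \<Rightarrow> complex set" where "Rg \<eta> = range (\<lambda>g. ev g \<eta>)"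

lemma Rg_add[intro]: "x \<in> Rg e \<Longrightarrow> y \<in> Rg e \<Longrightarrow> x + y \<in> Rg e"
  unfolding Rg_def by (auto intro!: image_eqI[where x="_ + _"] simp del: ev_add simp add: ev_add[symmetric])
lemma Rg_mult[intro]: "x \<in> Rg e \<Longrightarrow> y \<in> Rg e \<Longrightarrow> x * y \<in> Rg e"
  unfolding Rg_def by (auto intro!: image_eqI[where x="_ * _"] simp del: ev_mult simp add: ev_mult[symmetric])
lemma Rg_int[intro]: "of_int a \<in> Rg e"
  unfolding Rg_def by (rule image_eqI[where x="[:a:]"]) auto
lemma Rg_0[intro]: "0 \<in> Rg e" using Rg_int[of 0 e] by simp
lemma Rg_nat[intro]: "of_nat a \<in> Rg e"
  using Rg_int[of "int a" e] by simp
lemma Rg_eta[intro]: "e \<in> Rg e"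
  unfolding Rg_def by (rule image_eqI[where x="monom 1 1"]) auto
lemma Rg_ev[intro]: "ev g e \<in> Rg e"
  unfolding Rg_def by auto
lemma Rg_power[intro]: "x \<in> Rg e \<Longrightarrow> x ^ n \<in> Rg e"
  by (induct n) (auto simp: Rg_int[of 1, simplified])
lemma Rg_sum[intro]: "(\<And>i. i \<in> A \<Longrightarrow> f i \<in> Rg e) \<Longrightarrow> sum f A \<in> Rg e"
  by (induct A rule: infinite_finite_induct) (auto simp: Rg_int[of 0, simplified])

lemma freshman_R:
  assumes q: "prime q" and x: "x \<in> Rg e" and y: "y \<in> Rg e"
  shows "\<exists>r\<in>Rg e. (x+y)^q = x^q + y^q + of_nat q * r"
  using freshman_id[OF q, of x y] x y by (intro bexI[of _ "(\<Sum>k\<in>{1..<q}. of_nat ((q choose k) div q) * x^k * y^(q-k))"]) auto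

lemma frobenius:
  assumes q: "prime q"
  shows "\<exists>r\<in>Rg e. ev B e ^ q = ev B (e^q) + of_nat q * r"
proof (induct B rule: pCons_induct)
  case 0 then show ?case using q prime_gt_0_nat by (auto intro!: bexI[of _ 0] simp: power_0_left)
next
  case (pCons a B)
  obtain r2 where r2: "r2 \<in> Rg e" "ev B e ^ q = ev B (e^q) + of_nat q * r2" using pCons(2) by blast
  obtain r1 where r1: "r1 \<in> Rg e" "(of_int a + e * ev B e)^q = (of_int a)^q + (e * ev B e)^q + of_nat q * r1"
    using freshman_R[OF q, of "of_int a" e "e * ev B e"] by blast
  obtain t where t: "a ^ q - a = int q * t" using fermat_int[OF q, of a] by (auto elim: dvdE)
  have at: "(of_int a :: complex)^q = of_int a + of_nat q * of_int t"
    using arg_cong[OF t, of "of_int :: int \<Rightarrow> complex"] by (simp add: algebra_simps)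
  have "ev (pCons a B) e ^ q = (of_int a + e * ev B e)^q" by simp
  also have "\<dots> = of_int a + e^q * ev B (e^q) + of_nat q * (of_int t + e^q * r2 + r1)"
    unfolding r1(2) at power_mult_distrib r2(2) by (simp add: algebra_simps)
  also have "\<dots> = ev (pCons a B) (e^q) + of_nat q * (of_int t + e^q * r2 + r1)" by simp
  finally show ?case using r1(1) r2(1) by blast
qed


definition ismin :: "int poly \<Rightarrow> complex \<Rightarrow> bool" where
  "ismin m e \<longleftrightarrow> m \<noteq> 0 \<and> ev m e = 0 \<and> content m = 1 \<and>
      (\<forall>g. g \<noteq> 0 \<longrightarrow> ev g e = 0 \<longrightarrow> degree m \<le> degree g)"

lemma ismin_exists:
  assumes "f \<noteq> 0" "ev f e = 0"
  shows "\<exists>m. ismin m e"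
proof -
  define P where "P n \<longleftrightarrow> (\<exists>g. g \<noteq> 0 \<and> ev g e = 0 \<and> degree g = n)" for n
  have "P (degree f)" using assms P_def by blast
  then have "P (LEAST n. P n)" by (rule LeastI)
  then obtain g where g: "g \<noteq> 0" "ev g e = 0" "degree g = (LEAST n. P n)" unfolding P_def by blast
  have gmin: "\<forall>h. h \<noteq> 0 \<longrightarrow> ev h e = 0 \<longrightarrow> degree g \<le> degree h"
    using g(3) P_def by (auto intro: Least_le)
  define m where "m = primitive_part g"
  have c0: "content g \<noteq> 0" using g(1) by simp
  have "ev g e = of_int (content g) * ev m e"
    unfolding m_def by (metis content_times_primitive_part ev_smult)
  then have "ev m e = 0" using g(2) c0 by simp
  moreover have "m \<noteq> 0" "content m = 1" "degree m = degree g" using g(1) m_def by auto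
  ultimately show ?thesis using gmin unfolding ismin_def by auto
qed

lemma ismin_deg: assumes "ismin m e" shows "degree m \<ge> 1"
proof (rule ccontr)
  assume "\<not> degree m \<ge> 1"
  then have "degree m = 0" by simp
  then have "m = [:coeff m 0:]" by (metis degree_0_id)
  then have "ev m e = of_int (coeff m 0)" by (metis ev_const)
  moreover have "coeff m 0 \<noteq> 0" using assms \<open>m = [:coeff m 0:]\<close> unfolding ismin_def by (metis pCons_0_0)
  ultimately show False using assms unfolding ismin_def by simp
qed

lemma ismin_dvd:
  assumes m: "ismin m e" and g: "ev g e = 0"
  shows "m dvd g"
proof -
  have m0: "m \<noteq> 0" using m ismin_def by auto
  obtain s r where sr: "pseudo_divmod g m = (s, r)" by (metis surj_pair)
  define c where "c = coeff m (degree m) ^ (Suc (degree g) - degree m)"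
  have eq: "smult c g = m * s + r" using pseudo_divmod(1)[OF m0 sr] c_def by simp
  have rd: "r = 0 \<or> degree r < degree m" using pseudo_divmod(2)[OF m0 sr] .
  have "ev r e = 0"
  proof -
    have "ev (smult c g) e = ev (m * s + r) e" using eq by simp
    then show ?thesis using g m unfolding ismin_def by simp
  qed
  then have r0: "r = 0" using rd m unfolding ismin_def by force
  have c0: "c \<noteq> 0" unfolding c_def using m0 by simp
  have "primitive_part (smult c g) = primitive_part (m * s)" using eq r0 by simp
  then have "smult (unit_factor c) (primitive_part g) = m * primitive_part s"
    using m unfolding ismin_def by (simp add: primitive_part_smult primitive_part_mult primitive_part_prim)
  then have "m dvd smult (unit_factor c) (primitive_part g)" by (metis dvd_triv_left)
  then have "m dvd smult (unit_factor c) (smult (unit_factor c) (primitive_part g))"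
    by (metis dvd_smult)
  moreover have "unit_factor c * unit_factor c = 1" using c0 by (simp add: unit_factor_int_def sgn_if)
  ultimately have "m dvd primitive_part g" by simp
  also have "primitive_part g dvd g" by (metis content_times_primitive_part dvd_smult dvd_refl)
  finally show ?thesis .
qed

lemma ismin_lc:
  assumes m: "ismin m e" and N: "N > 0" and eN: "e ^ N = 1"
  shows "\<bar>lead_coeff m\<bar> = 1"
proof -
  let ?X = "monom 1 N - 1 :: int poly"
  have "ev ?X e = 0" using eN by simp
  then have "m dvd ?X" using ismin_dvd[OF m] by blast
  then obtain B where B: "?X = m * B" by (rule dvdE)
  have "?X = (-1) + monom 1 N" by simp
  moreover have "lead_coeff ((-1) + monom 1 N) = lead_coeff (monom 1 N::int poly)"
    by (rule lead_coeff_add_le) (use N in \<open>simp add: degree_monom_eq\<close>)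
  ultimately have "lead_coeff ?X = 1" by (metis lead_coeff_monom)
  then have "lead_coeff m * lead_coeff B = 1" using B by (simp add: lead_coeff_mult)
  then show ?thesis by (auto simp add: zmult_eq_1_iff)
qed


lemma no_inv_q:
  assumes m: "ismin m e" and lc: "\<bar>lead_coeff m\<bar> = 1" and q: "q \<ge> (2::nat)"
    and g: "of_nat q * ev g e = 1"
  shows False
proof -
  have m0: "m \<noteq> 0" using m ismin_def by auto
  obtain s r where sr: "pseudo_divmod g m = (s, r)" by (metis surj_pair)
  define c where "c = coeff m (degree m) ^ (Suc (degree g) - degree m)"
  have eq: "smult c g = m * s + r" using pseudo_divmod(1)[OF m0 sr] c_def by simp
  have rd: "r = 0 \<or> degree r < degree m" using pseudo_divmod(2)[OF m0 sr] .
  have c1: "\<bar>c\<bar> = 1" unfolding c_def using lc by (simp add: power_abs)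
  have "ev r e = of_int c * ev g e"
  proof -
    have "ev (smult c g) e = ev (m * s + r) e" using eq by simp
    then show ?thesis using m unfolding ismin_def by simp
  qed
  define P where "P = smult (int q) r - [:c:]"
  have "ev P e = of_int c * (of_nat q * ev g e) - of_int c"
    unfolding P_def using \<open>ev r e = _\<close> by (simp add: algebra_simps)
  then have evP: "ev P e = 0" using g by simp
  have "coeff P 0 = int q * coeff r 0 - c" unfolding P_def by simp
  moreover have "int q * coeff r 0 \<noteq> c"
  proof
    assume "int q * coeff r 0 = c"
    then have "int q dvd c" by (metis dvd_triv_left)
    then have "int q dvd 1" using c1 by (metis dvd_abs_iff)
    then show False using q by simp
  qed
  ultimately have P0: "P \<noteq> 0" by (metis coeff_0 right_minus_eq)
  have d1: "degree m \<ge> 1" by (rule ismin_deg[OF m])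
  have "degree P < degree m"
  proof -
    have "degree (smult (int q) r) < degree m" using rd d1 by auto
    moreover have "degree [:c:] < degree m" using d1 by simp
    ultimately show ?thesis unfolding P_def by (metis degree_diff_less)
  qed
  then show False using m P0 evP unfolding ismin_def by (meson leD)
qed

lemma galois_prime:
  assumes N: "N > 0" and eN: "e ^ N = 1" and q: "prime q" and qN: "\<not> q dvd N"
    and f: "ev f e = 0"
  shows "ev f (e ^ q) = 0"
proof -
  let ?X = "monom 1 N - 1 :: int poly"
  have X0: "?X \<noteq> 0"
  proof
    assume "?X = 0"
    then have "coeff ?X N = 0" by simp
    then show False using N by simp
  qed
  have evX: "ev ?X e = 0" using eN by simp
  obtain m where m: "ismin m e" using ismin_exists[OF X0 evX] by blast
  have lc: "\<bar>lead_coeff m\<bar> = 1" by (rule ismin_lc[OF m N eN])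
  have "m dvd f" using ismin_dvd[OF m f] .
  then obtain h where fh: "f = m * h" by (rule dvdE)
  have "m dvd ?X" using ismin_dvd[OF m evX] .
  then obtain B where XB: "?X = m * B" by (rule dvdE)
  show ?thesis
  proof (cases "ev m (e^q) = 0")
    case True then show ?thesis using fh by simp
  next
    case False
    have "ev ?X (e^q) = 0" using eN by (simp add: power_mult[symmetric] mult.commute[of q N] power_mult)
    then have Bq: "ev B (e^q) = 0" using XB False by simp
    have "pderiv ?X = pderiv (m * B)" using XB by simp
    then have "pderiv ?X = m * pderiv B + B * pderiv m" by (simp add: pderiv_mult)
    moreover have "pderiv ?X = monom (int N) (N - 1)" by (simp add: pderiv_monom pderiv_diff)
    ultimately have "ev (monom (int N) (N - 1)) e = ev (m * pderiv B + B * pderiv m) e" by simp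
    then have D: "of_nat N * e ^ (N - 1) = ev B e * ev (pderiv m) e" using m unfolding ismin_def by simp
    obtain r where r: "r \<in> Rg e" "ev B e ^ q = ev B (e^q) + of_nat q * r" using frobenius[OF q] by blast
    have A1: "(of_nat N * e ^ (N - 1))^q = of_nat q * (r * ev (pderiv m) e ^ q)"
      unfolding D power_mult_distrib r(2) Bq by simp
    have A2: "(of_nat N * e ^ (N - 1))^q * e^q = of_nat N ^ q"
    proof -
      have "(of_nat N * e ^ (N - 1))^q * e^q = of_nat N ^ q * (e ^ (N - 1) * e)^q"
        by (simp add: power_mult_distrib)
      also have "e ^ (N - 1) * e = 1" using N eN by (metis power_minus_mult)
      finally show ?thesis by simp
    qed
    have "(of_nat (N ^ q)::complex) = (of_nat N * e ^ (N - 1))^q * e^q" using A2 by simp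
    also have "\<dots> = of_nat q * (r * ev (pderiv m) e ^ q * e^q)" unfolding A1 by (simp add: mult.assoc)
    finally have NR: "(of_nat (N ^ q)::complex) = of_nat q * (r * ev (pderiv m) e ^ q * e^q)" .
    define r' where "r' = r * ev (pderiv m) e ^ q * e^q"
    have r'R: "r' \<in> Rg e" unfolding r'_def using r(1) by auto
    have "coprime N q" using qN q by (metis prime_imp_coprime coprime_commute)
    then have "coprime (N ^ q) q" by simp
    then have "coprime (int (N ^ q)) (int q)" by simp
    then obtain u v where uv: "u * int (N ^ q) + v * int q = 1"
      by (metis bezout_int gcd_int_def coprime_iff_gcd_eq_1)
    then have "(of_int (u * int (N ^ q) + v * int q) :: complex) = 1" by simp
    then have "of_int u * of_nat (N ^ q) + of_int v * of_nat q = (1::complex)" by simp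
    then have "of_nat q * (of_int u * r' + of_int v) = (1::complex)"
      unfolding NR r'_def[symmetric] by (simp add: algebra_simps)
    moreover have "of_int u * r' + of_int v \<in> Rg e" using r'R by auto
    ultimately obtain g where "of_nat q * ev g e = 1" unfolding Rg_def by auto
    then show ?thesis using no_inv_q[OF m lc] q prime_ge_2_nat by blast
  qed
qed


lemma galois:
  assumes N: "N > 0"
  shows "a > 0 \<Longrightarrow> coprime a N \<Longrightarrow> e ^ N = 1 \<Longrightarrow> ev f e = 0 \<Longrightarrow> ev f (e ^ a) = 0"
proof (induct a arbitrary: e rule: less_induct)
  case (less a)
  show ?case
  proof (cases "a = 1")
    case True then show ?thesis using less by simp
  next
    case False
    obtain q where q: "prime q" "q dvd a" using prime_factor_nat[OF False] by blast
    obtain a' where a': "a = q * a'" using q(2) by (rule dvdE)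
    have qN: "\<not> q dvd N"
    proof
      assume "q dvd N"
      then have "is_unit q" using q(2) less(3) by (metis coprime_common_divisor)
      then show False using q(1) by simp
    qed
    have q2: "q \<ge> 2" using q(1) prime_ge_2_nat by blast
    have a'0: "a' > 0" using a' less(2) by (cases a') auto
    have a'lt: "a' < a" using a' q2 a'0 by simp
    have cop: "coprime a' N" using less(3) a' by simp
    have e1: "ev f (e ^ q) = 0" by (rule galois_prime[OF N less(4) q(1) qN less(5)])
    have e2: "(e ^ q) ^ N = 1" using less(4) by (metis power_mult mult.commute power_one)
    have "ev f ((e ^ q) ^ a') = 0" by (rule less(1)[OF a'lt a'0 cop e2 e1])
    then show ?thesis using a' by (simp add: power_mult)
  qed
qed

lemma nt_lemma:
  fixes N k :: nat
  assumes N: "N > 0" and nd: "\<not> N dvd fact k"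
  shows "\<exists>p. prime p \<and> p dvd N \<and> (p^2 dvd N \<or> k < p)"
proof (rule ccontr)
  assume H: "\<not> ?thesis"
  have "N dvd fact k"
  proof (rule multiplicity_le_imp_dvd)
    show "N \<noteq> 0" using N by simp
  next
    fix p :: nat assume p: "prime p"
    show "multiplicity p N \<le> multiplicity p (fact k)"
    proof (cases "p dvd N")
      case False
      then show ?thesis by (simp add: not_dvd_imp_multiplicity_0)
    next
      case True
      then have np2: "\<not> p^2 dvd N" and pk: "p \<le> k" using H p by auto
      have pu: "\<not> is_unit p" using p by (metis not_prime_unit)
      have "multiplicity p N < 2"
        by (rule multiplicity_lessI) (use np2 N pu in auto)
      moreover have "p dvd fact k" using pk p by (simp add: prime_dvd_fact_iff)
      then have "1 \<le> multiplicity p (fact k)"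
        by (intro multiplicity_geI) (use pu in auto)
      ultimately show ?thesis by simp
    qed
  qed
  then show False using nd by simp
qed

lemma root_rep:
  fixes N :: nat
  assumes N: "N > 0" and v: "v ^ N = 1"
  shows "\<exists>k<N. v = cis (2 * pi / real N) ^ k"
proof -
  have "v \<in> (\<lambda>k. cis (2 * pi * real k / real N)) ` {..<N}"
    using Complex.bij_betw_roots_unity[OF N] v unfolding bij_betw_def by auto
  then obtain k where "k < N" "v = cis (2 * pi * real k / real N)" by auto
  moreover have "cis (2 * pi / real N) ^ k = cis (real k * (2 * pi / real N))" by (rule Complex.DeMoivre)
  ultimately show ?thesis by (intro exI[of _ k]) (simp add: mult_ac)
qed

lemma zeta_N:
  fixes N :: nat assumes N: "N > 0" shows "cis (2 * pi / real N) ^ N = 1"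
proof -
  have "cis (2 * pi / real N) ^ N = cis (real N * (2 * pi / real N))" by (rule Complex.DeMoivre)
  also have "\<dots> = 1" using N by simp
  finally show ?thesis .
qed

lemma zeta_pow_mod:
  fixes N :: nat
  assumes N: "N > 0"
  shows "cis (2 * pi / real N) ^ k = cis (2 * pi / real N) ^ (k mod N)"
proof -
  let ?z = "cis (2 * pi / real N)"
  have zN: "?z ^ N = 1" by (rule zeta_N[OF N])
  have "?z ^ k = ?z ^ (N * (k div N) + k mod N)" by simp
  also have "\<dots> = (?z ^ N) ^ (k div N) * ?z ^ (k mod N)" by (simp only: power_add power_mult)
  also have "\<dots> = ?z ^ (k mod N)" using zN by simp
  finally show ?thesis .
qed

lemma zeta_pow_eq_1:
  fixes N :: nat
  assumes N: "N > 0"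
  shows "cis (2 * pi / real N) ^ k = 1 \<longleftrightarrow> N dvd k"
proof -
  let ?z = "cis (2 * pi / real N)"
  have zN: "?z ^ N = 1" by (rule zeta_N[OF N])
  have zk: "?z ^ k = ?z ^ (k mod N)" by (rule zeta_pow_mod[OF N])
  have inj: "inj_on (\<lambda>k. cis (2 * pi * real k / real N)) {..<N}"
    using Complex.bij_betw_roots_unity[OF N] unfolding bij_betw_def by auto
  have "?z ^ k = 1 \<longleftrightarrow> cis (2 * pi * real (k mod N) / real N) = cis (2 * pi * real 0 / real N)"
    by (subst zk) (simp only: Complex.DeMoivre, simp add: mult_ac)
  also have "\<dots> \<longleftrightarrow> k mod N = 0" using inj_onD[OF inj] N by auto
  finally show ?thesis by auto
qed



lemma cop1: "coprime (1 + s*M) (M::nat)"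
  by (metis coprime_mult_right_iff coprime_diff_one_right_nat diff_add_inverse linorder_neqE_nat trans_less_add1 zero_neq_one less_zeroE)

lemma md: "(r::nat) < p \<Longrightarrow> p dvd (p - r + e) \<longleftrightarrow> e mod p = r"
  by (metis Nat.add_diff_assoc2 add_increasing2 dvd_minus_mod mod_add_self1
    mod_nat_eqI order.strict_implies_order zero_le)

lemma geom_omega:
  fixes p :: nat
  assumes p: "p > 0"
  shows "(\<Sum>s<p. cis (2 * pi / real p) ^ (s*t)) = (if p dvd t then of_nat p else 0)"
proof -
  let ?w = "cis (2 * pi / real p)"
  have eq: "\<And>s. ?w ^ (s*t) = (?w ^ t) ^ s" by (simp only: mult.commute[of _ t] power_mult)
  show ?thesis
  proof (cases "p dvd t")
    case True
    then have "?w ^ t = 1" using zeta_pow_eq_1[OF p] by simp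
    then show ?thesis using True unfolding eq by simp
  next
    case False
    then have ne: "?w ^ t \<noteq> 1" using zeta_pow_eq_1[OF p] by simp
    have "(\<Sum>s<p. (?w ^ t) ^ s) = ((?w ^ t) ^ p - 1) / (?w ^ t - 1)" by (rule geometric_sum[OF ne])
    also have "(?w ^ t) ^ p = (?w ^ p) ^ t" by (simp add: power_mult[symmetric] mult.commute)
    also have "?w ^ p = 1" by (rule zeta_N[OF p])
    finally show ?thesis using False unfolding eq by simp
  qed
qed

lemma zeta_omega:
  fixes N p M :: nat
  assumes "N = p * M" "M > 0" "p > 0"
  shows "cis (2 * pi / real N) ^ M = cis (2 * pi / real p)"
proof -
  have "cis (2 * pi / real N) ^ M = cis (real M * (2 * pi / real N))" by (rule Complex.DeMoivre)
  also have "real M * (2 * pi / real N) = 2 * pi / real p" using assms by (simp add: field_simps)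
  finally show ?thesis .
qed

lemma mann_step:
  fixes A :: "'i set" and c :: "'i \<Rightarrow> int" and v :: "'i \<Rightarrow> complex" and N p :: nat
  assumes fin: "finite A" and N: "N > 0" and p: "prime p" "p dvd N" and pc: "p^2 dvd N \<or> card A < p"
    and vN: "\<forall>i\<in>A. v i ^ N = 1" and van: "(\<Sum>i\<in>A. of_int (c i) * v i) = 0"
    and minl: "\<forall>B. B \<subseteq> A \<longrightarrow> B \<noteq> {} \<longrightarrow> B \<noteq> A \<longrightarrow> (\<Sum>i\<in>B. of_int (c i) * v i) \<noteq> 0"
    and i0: "i0 \<in> A" "v i0 = 1"
  shows "\<forall>i\<in>A. v i ^ (N div p) = 1"
proof -
  define M where "M = N div p"
  have NpM: "N = p * M" using p(2) M_def by simp
  have p0: "p > 0" using p(1) prime_gt_0_nat by blast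
  have M0: "M > 0" using NpM N by (cases M) auto
  define z where "z = cis (2 * pi / real N)"
  define w where "w = cis (2 * pi / real p)"
  have zM: "z ^ M = w" unfolding z_def w_def by (rule zeta_omega[OF NpM M0 p0])
  have "\<forall>i\<in>A. \<exists>k. k < N \<and> v i = z ^ k" using root_rep[OF N] vN unfolding z_def by blast
  then obtain e where e: "\<forall>i\<in>A. e i < N \<and> v i = z ^ e i" by metis
  have pe0: "p dvd e i0"
  proof -
    have "z ^ e i0 = 1" using e i0 by simp
    then have "N dvd e i0" using zeta_pow_eq_1[OF N] unfolding z_def by simp
    then show ?thesis using p(2) by (rule dvd_trans[rotated])
  qed
  define F where "F s = (\<Sum>i\<in>A. of_int (c i) * v i * w ^ (s * e i))" for s
  have Fgal: "F s = 0" if cop: "coprime (1 + s * M) N" for s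
  proof -
    define f where "f = (\<Sum>i\<in>A. monom (c i) (e i))"
    have "ev f z = (\<Sum>i\<in>A. of_int (c i) * z ^ e i)" unfolding f_def by simp
    also have "\<dots> = (\<Sum>i\<in>A. of_int (c i) * v i)" using e by (intro sum.cong refl) simp
    finally have "ev f z = (\<Sum>i\<in>A. of_int (c i) * v i)" .
    then have f0: "ev f z = 0" using van by simp
    have zN: "z ^ N = 1" unfolding z_def by (rule zeta_N[OF N])
    have "ev f (z ^ (1 + s * M)) = 0" by (rule galois[OF N _ cop zN f0]) simp
    moreover have "ev f (z ^ (1 + s * M)) = F s"
      unfolding f_def F_def ev_sum
    proof (intro sum.cong refl)
      fix i assume i: "i \<in> A"
      have "(z ^ (1 + s * M)) ^ e i = z ^ ((1 + s * M) * e i)" by (simp only: power_mult)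
      also have "(1 + s * M) * e i = e i + M * (s * e i)" by (simp add: algebra_simps)
      also have "z ^ (e i + M * (s * e i)) = z ^ e i * (z ^ M) ^ (s * e i)" by (simp only: power_add power_mult)
      finally have "(z ^ (1 + s * M)) ^ e i = z ^ e i * (z ^ M) ^ (s * e i)" .
      then show "ev (monom (c i) (e i)) (z ^ (1 + s * M)) = of_int (c i) * v i * w ^ (s * e i)"
        using e i zM by simp
    qed
    ultimately show ?thesis by simp
  qed
  have cls: "(\<Sum>s<p. w ^ (s * (p - r)) * F s) = of_nat p * (\<Sum>i\<in>{i\<in>A. e i mod p = r}. of_int (c i) * v i)"
    if r: "r < p" for r
  proof -
    have "(\<Sum>s<p. w ^ (s * (p - r)) * F s) = (\<Sum>s<p. \<Sum>i\<in>A. of_int (c i) * v i * w ^ (s * (p - r + e i)))"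
      unfolding F_def sum_distrib_left by (intro sum.cong refl) (simp add: power_add algebra_simps)
    also have "\<dots> = (\<Sum>i\<in>A. of_int (c i) * v i * (\<Sum>s<p. w ^ (s * (p - r + e i))))"
      by (subst sum.swap) (simp add: sum_distrib_left)
    also have "\<dots> = (\<Sum>i\<in>A. if e i mod p = r then of_nat p * (of_int (c i) * v i) else 0)"
      unfolding w_def geom_omega[OF p0] using md[OF r] by (intro sum.cong refl) simp
    also have "\<dots> = of_nat p * (\<Sum>i\<in>A. if e i mod p = r then of_int (c i) * v i else 0)"
      unfolding sum_distrib_left by (intro sum.cong refl) simp
    also have "\<dots> = of_nat p * (\<Sum>i\<in>{i\<in>A. e i mod p = r}. of_int (c i) * v i)"
      using fin by (simp add: sum.inter_filter)
    finally show ?thesis .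
  qed
  have allF: "\<forall>s<p. F s = 0"
  proof (cases "p^2 dvd N")
    case True
    have "p * p dvd p * M" using True NpM by (simp add: power2_eq_square)
    then have "p dvd M" using p0 by simp
    then obtain k where k: "M = p * k" by (rule dvdE)
    have "M * M = N * k" using k NpM by simp
    then have ND: "N dvd M * M" by (metis dvd_triv_left)
    show ?thesis
    proof (intro allI impI)
      fix s assume "s < p"
      have "coprime (1 + s * M) (M * M)" using cop1 by (simp add: coprime_mult_right_iff)
      then have "coprime (1 + s * M) N" using ND by (metis coprime_divisors dvd_refl)
      then show "F s = 0" by (rule Fgal)
    qed
  next
    case False
    then have cA: "card A < p" using pc by simp
    have pM: "\<not> p dvd M"
    proof
      assume "p dvd M"
      then have "p^2 dvd N" using NpM by (simp add: power2_eq_square)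
      then show False using False by simp
    qed
    have uniq: "s = s'" if "s < p" "s' < p" "p dvd 1 + s * M" "p dvd 1 + s' * M" for s s'
    proof -
      have key: "a = b" if ab: "a \<le> b" "b < p" "p dvd 1 + a * M" "p dvd 1 + b * M" for a b
      proof -
        have "p dvd (1 + b * M) - (1 + a * M)" using ab(3,4) by (rule dvd_diff_nat[rotated])
        also have "(1 + b * M) - (1 + a * M) = (b - a) * M" by (simp add: diff_mult_distrib)
        finally have "p dvd b - a" using p(1) pM by (simp add: prime_dvd_mult_iff)
        moreover have "b - a < p" using ab by simp
        ultimately have "b - a = 0" by (metis dvd_imp_le neq0_conv not_le)
        then show ?thesis using ab by simp
      qed
      show ?thesis
      proof (cases "s \<le> s'")
        case True then show ?thesis using key[of s s'] that by blast
      next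
        case False then show ?thesis using key[of s' s] that by simp
      qed
    qed
    have valid: "F s = 0" if "s < p" "\<not> p dvd 1 + s * M" for s
    proof -
      have "coprime (1 + s * M) p" using that p(1) by (metis prime_imp_coprime coprime_commute)
      then have "coprime (1 + s * M) N" using cop1 NpM by (simp add: coprime_mult_right_iff)
      then show ?thesis by (rule Fgal)
    qed
    have "card ((\<lambda>i. e i mod p) ` A) \<le> card A" using fin by (rule card_image_le)
    then have "(\<lambda>i. e i mod p) ` A \<noteq> {..<p}" using cA by auto
    moreover have "(\<lambda>i. e i mod p) ` A \<subseteq> {..<p}" using p0 by auto
    ultimately obtain r1 where r1: "r1 < p" "r1 \<notin> (\<lambda>i. e i mod p) ` A" by blast
    then have emp: "{i\<in>A. e i mod p = r1} = {}" by auto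
    have sumz: "(\<Sum>s<p. w ^ (s * (p - r1)) * F s) = 0" using cls[OF r1(1)] emp by simp
    show ?thesis
    proof (intro allI impI)
      fix s assume s: "s < p"
      show "F s = 0"
      proof (cases "p dvd 1 + s * M")
        case False then show ?thesis using valid s by blast
      next
        case True
        have others: "\<forall>s'\<in>{..<p} - {s}. w ^ (s' * (p - r1)) * F s' = 0"
          using valid uniq s True by auto
        have "(\<Sum>s<p. w ^ (s * (p - r1)) * F s) = w ^ (s * (p - r1)) * F s + (\<Sum>s'\<in>{..<p} - {s}. w ^ (s' * (p - r1)) * F s')"
          using s by (subst sum.remove[of _ s]) auto
        also have "(\<Sum>s'\<in>{..<p} - {s}. w ^ (s' * (p - r1)) * F s') = 0" using others by (intro sum.neutral) blast
        finally have "w ^ (s * (p - r1)) * F s = 0" using sumz by simp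
        moreover have "w \<noteq> 0" unfolding w_def by simp
        ultimately show ?thesis by simp
      qed
    qed
  qed
  have "(\<Sum>i\<in>{i\<in>A. e i mod p = 0}. of_int (c i) * v i) = 0"
    using cls[OF p0] allF p0 by simp
  moreover have "i0 \<in> {i\<in>A. e i mod p = 0}" using i0 pe0 by simp
  ultimately have "{i\<in>A. e i mod p = 0} = A"
  proof (rule_tac ccontr)
    assume s0: "(\<Sum>i\<in>{i\<in>A. e i mod p = 0}. of_int (c i) * v i) = 0"
      and i0': "i0 \<in> {i\<in>A. e i mod p = 0}" and ne: "{i\<in>A. e i mod p = 0} \<noteq> A"
    have "{i\<in>A. e i mod p = 0} \<subseteq> A" by auto
    moreover have "{i\<in>A. e i mod p = 0} \<noteq> {}" using i0' by auto
    ultimately have "(\<Sum>i\<in>{i\<in>A. e i mod p = 0}. of_int (c i) * v i) \<noteq> 0"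
      using minl ne by simp
    then show False using s0 by simp
  qed
  then have pd: "\<forall>i\<in>A. p dvd e i" by auto
  show ?thesis
  proof
    fix i assume i: "i \<in> A"
    obtain t where t: "e i = p * t" using pd i by (meson dvdE)
    have "v i ^ M = z ^ (e i * M)" using e i by (simp add: power_mult)
    also have "e i * M = N * t" using t NpM by simp
    also have "z ^ (N * t) = 1" unfolding z_def by (simp add: power_mult zeta_N[OF N])
    finally show "v i ^ (N div p) = 1" unfolding M_def .
  qed
qed


lemma mann:
  fixes A :: "'i set" and c :: "'i \<Rightarrow> int" and u :: "'i \<Rightarrow> complex"
  assumes fin: "finite A" and n: "n > 0" and un: "\<forall>i\<in>A. u i ^ n = 1"
    and van: "(\<Sum>i\<in>A. of_int (c i) * u i) = 0"
    and minl: "\<forall>B. B \<subseteq> A \<longrightarrow> B \<noteq> {} \<longrightarrow> B \<noteq> A \<longrightarrow> (\<Sum>i\<in>B. of_int (c i) * u i) \<noteq> 0"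
    and j: "j \<in> A"
  shows "\<forall>i\<in>A. (u i / u j) ^ fact (card A) = 1"
proof -
  have uj: "u j \<noteq> 0" using un j n by (metis power_0_left zero_neq_one neq0_conv)
  define v where "v i = u i / u j" for i
  have vsum: "(\<Sum>i\<in>B. of_int (c i) * v i) = (\<Sum>i\<in>B. of_int (c i) * u i) / u j" for B
    unfolding v_def by (simp add: sum_divide_distrib)
  have vvan: "(\<Sum>i\<in>A. of_int (c i) * v i) = 0" using vsum van by simp
  have vmin: "\<forall>B. B \<subseteq> A \<longrightarrow> B \<noteq> {} \<longrightarrow> B \<noteq> A \<longrightarrow> (\<Sum>i\<in>B. of_int (c i) * v i) \<noteq> 0"
    using vsum minl uj by simp
  have vj: "v j = 1" using uj v_def by simp
  have vn: "\<forall>i\<in>A. v i ^ n = 1" using un j unfolding v_def by (simp add: power_divide)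
  define K :: nat where "K = fact (card A)"
  have main: "N > 0 \<Longrightarrow> \<forall>i\<in>A. v i ^ N = 1 \<Longrightarrow> \<forall>i\<in>A. v i ^ K = 1" for N
  proof (induct N rule: less_induct)
    case (less N)
    show ?case
    proof (cases "N dvd K")
      case True
      then obtain t where "K = N * t" by (rule dvdE)
      then show ?thesis using less(3) by (simp add: power_mult)
    next
      case False
      obtain p where p: "prime p" "p dvd N" "p^2 dvd N \<or> card A < p"
        using nt_lemma[OF less(2) False[unfolded K_def]] by blast
      have step: "\<forall>i\<in>A. v i ^ (N div p) = 1"
        by (rule mann_step[OF fin less(2) p(1) p(2) p(3) less(3) vvan vmin j vj])
      have p2: "p \<ge> 2" using p(1) prime_ge_2_nat by blast
      have lt: "N div p < N" using less(2) p2 by simp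
      have gt: "N div p > 0" using p(2) less(2) p2 by (metis dvd_div_eq_0_iff neq0_conv not_numeral_le_zero)
      show ?thesis by (rule less(1)[OF lt gt step])
    qed
  qed
  show ?thesis using main[OF n vn] unfolding v_def K_def by blast
qed



definition crd :: "(complex^'d) \<times> (complex^'d) \<Rightarrow> 'd + 'd \<Rightarrow> complex" where
  "crd x i = (case i of Inl j \<Rightarrow> fst x $ j | Inr j \<Rightarrow> snd x $ j)"
definition sg :: "'d + 'd \<Rightarrow> int" where "sg i = (case i of Inl _ \<Rightarrow> 1 | Inr _ \<Rightarrow> -1)"
definition mk :: "('d + 'd \<Rightarrow> complex) \<Rightarrow> (complex^'d) \<times> (complex^'d)" where
  "mk f = ((\<chi> j. f (Inl j)), (\<chi> j. f (Inr j)))"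

lemma crd_mk[simp]: "crd (mk f) i = f i"
  unfolding crd_def mk_def by (cases i) auto
lemma mk_crd[simp]: "mk (crd x) = x"
  unfolding crd_def mk_def by (cases x) (auto simp: vec_eq_iff)
lemma crd_inj: "x = y \<longleftrightarrow> (\<forall>i. crd x i = crd y i)"
  by (metis mk_crd ext)
lemma crd_Inl[simp]: "crd x (Inl j) = fst x $ j" unfolding crd_def by simp
lemma crd_Inr[simp]: "crd x (Inr j) = snd x $ j" unfolding crd_def by simp
lemma sg_Inl[simp]: "sg (Inl j) = 1" unfolding sg_def by simp
lemma sg_Inr[simp]: "sg (Inr j) = -1" unfolding sg_def by simp
lemma sg_abs: "\<bar>sg i\<bar> = 1" unfolding sg_def by (cases i) auto

lemma crd_mult2[simp]: "crd (mult2 a b) i = crd a i * crd b i"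
  unfolding crd_def mult2_def by (cases i) auto
lemma crd_inv2[simp]: "crd (inv2 a) i = inverse (crd a i)"
  unfolding crd_def inv2_def by (cases i) auto
lemma crd_one2[simp]: "crd one2 i = 1"
  unfolding crd_def one2_def by (cases i) auto

lemma torus2_iff: "x \<in> torus2 \<longleftrightarrow> (\<forall>i. cmod (crd x i) = 1)"
  unfolding torus2_def torus_def crd_def by (cases x) (auto split: sum.splits)

lemma tors2_iff: "x \<in> tors2 \<longleftrightarrow> (\<forall>i. cmod (crd x i) = 1) \<and> (\<exists>n::nat. n > 0 \<and> (\<forall>i. crd x i ^ n = 1))"
  unfolding tors2_def torus2_iff crd_def by (auto split: sum.splits)

lemma sum_UNIV_Plus: "(\<Sum>i\<in>(UNIV::('a::finite + 'b::finite) set). f i) = (\<Sum>j\<in>UNIV. f (Inl j)) + (\<Sum>j\<in>UNIV. f (Inr j))"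
proof -
  have "(\<Sum>i\<in>(UNIV::('a + 'b) set). f i) = (\<Sum>i\<in>UNIV <+> UNIV. f i)" by simp
  also have "\<dots> = (\<Sum>j\<in>UNIV. f (Inl j)) + (\<Sum>j\<in>UNIV. f (Inr j))" by (subst sum.Plus) auto
  finally show ?thesis .
qed

lemma V_iff: "x \<in> Vset \<longleftrightarrow> (\<Sum>i\<in>UNIV. of_int (sg i) * crd x i) = 0"
  unfolding Vset_def by (simp add: sum_UNIV_Plus sum_negf)


definition Tset :: "('d + 'd \<Rightarrow> 'd + 'd) \<Rightarrow> ((complex^'d) \<times> (complex^'d)) set" where
  "Tset L = {x \<in> torus2. \<forall>i. crd x i = crd x (L i)}"

lemma cont_crd: "continuous_on S (\<lambda>x::(complex^'d) \<times> (complex^'d). crd x i)"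
  by (cases i) (auto intro!: continuous_intros)

lemma closed_Tset:
  fixes L :: "'d::finite + 'd \<Rightarrow> 'd + 'd"
  shows "closed (Tset L)"
proof -
  have "Tset L = {x. \<forall>i. cmod (crd x i) = 1} \<inter> {x. \<forall>i. crd x i = crd x (L i)}"
    unfolding Tset_def torus2_iff by auto
  moreover have "closed {x::(complex^'d) \<times> (complex^'d). \<forall>i. cmod (crd x i) = 1}"
    by (intro closed_Collect_all closed_Collect_eq continuous_intros cont_crd)
  moreover have "closed {x::(complex^'d) \<times> (complex^'d). \<forall>i. crd x i = crd x (L i)}"
    by (intro closed_Collect_all closed_Collect_eq cont_crd)
  ultimately show ?thesis by auto
qed

lemma connected_Tset:
  assumes L: "\<forall>i. L (L i) = L i"
  shows "connected (Tset (L :: 'd::finite + 'd \<Rightarrow> 'd + 'd))"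
proof -
  define \<phi> :: "real^('d + 'd) \<Rightarrow> (complex^'d) \<times> (complex^'d)" where
    "\<phi> v = ((\<chi> j. cis (2 * pi * v $ L (Inl j))), (\<chi> j. cis (2 * pi * v $ L (Inr j))))" for v
  have crdphi: "crd (\<phi> v) i = cis (2 * pi * v $ L i)" for v i
    unfolding \<phi>_def crd_def by (cases i) auto
  have cont: "continuous_on UNIV \<phi>"
    unfolding \<phi>_def by (intro continuous_intros)
  have "Tset L = \<phi> ` UNIV"
  proof
    show "\<phi> ` UNIV \<subseteq> Tset L"
      unfolding Tset_def torus2_iff using L by (auto simp: crdphi)
  next
    show "Tset L \<subseteq> \<phi> ` UNIV"
    proof
      fix x assume x: "x \<in> Tset L"
      define v :: "real^('d + 'd)" where "v = (\<chi> r. Arg (crd x r) / (2 * pi))"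
      have "crd (\<phi> v) i = crd x i" for i
      proof -
        have n1: "cmod (crd x (L i)) = 1" using x unfolding Tset_def torus2_iff by auto
        have "crd (\<phi> v) i = cis (Arg (crd x (L i)))" unfolding crdphi v_def by simp
        also have "\<dots> = sgn (crd x (L i))" using n1 by (intro cis_Arg) auto
        also have "\<dots> = crd x (L i)" using n1 by (simp add: sgn_div_norm)
        also have "\<dots> = crd x i" using x unfolding Tset_def by auto
        finally show ?thesis .
      qed
      then have "\<phi> v = x" using crd_inj by blast
      then show "x \<in> \<phi> ` UNIV" by blast
    qed
  qed
  then show ?thesis using connected_continuous_image[OF cont connected_UNIV] by simp
qed

lemma ccs_Tset:
  assumes L: "\<forall>i. L (L i) = L i"
  shows "closed_connected_subgroup2 (Tset L)"
  unfolding closed_connected_subgroup2_def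
proof (intro conjI ballI)
  show "Tset L \<subseteq> torus2" unfolding Tset_def by auto
  show "one2 \<in> Tset L" unfolding Tset_def torus2_iff by simp
  show "mult2 a b \<in> Tset L" if "a \<in> Tset L" "b \<in> Tset L" for a b
    using that unfolding Tset_def torus2_iff by (auto simp: norm_mult)
  show "inv2 a \<in> Tset L" if "a \<in> Tset L" for a
    using that unfolding Tset_def torus2_iff by (auto simp: norm_inverse)
  show "closed (Tset L)" by (rule closed_Tset)
  show "connected (Tset L)" by (rule connected_Tset[OF L])
qed

lemma lie_dim_Tset:
  assumes ab: "a \<noteq> b" "L (Inl a) = L (Inl b)"
  shows "lie_dim (fst ` Tset (L :: 'd::finite + 'd \<Rightarrow> 'd + 'd)) < CARD('d)"
proof -
  have fz: "z $ a = z $ b" if "z \<in> fst ` Tset L" for z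
  proof -
    from that obtain x where x: "x \<in> Tset L" "z = fst x" by blast
    have "z $ a = crd x (Inl a)" using x by simp
    also have "\<dots> = crd x (L (Inl a))" using x unfolding Tset_def by auto
    also have "\<dots> = crd x (Inl b)" using x ab unfolding Tset_def by auto
    finally show ?thesis using x by simp
  qed
  define S where "S = {v :: real^'d. \<forall>t::real.
      (\<chi> j. exp (2 * complex_of_real pi * \<i> * complex_of_real (t * v$j))) \<in> fst ` Tset L}"
  define W where "W = {v :: real^'d. v $ a = v $ b}"
  have SW: "S \<subseteq> W"
  proof
    fix v assume v: "v \<in> S"
    show "v \<in> W"
    proof (rule ccontr)
      assume "v \<notin> W"
      then have d: "v $ a - v $ b \<noteq> 0" unfolding W_def by simp
      define t where "t = 1 / (2 * (v $ a - v $ b))"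
      have "(\<chi> j. exp (2 * complex_of_real pi * \<i> * complex_of_real (t * v$j))) \<in> fst ` Tset L"
        using v unfolding S_def by blast
      from fz[OF this] have eq: "exp (2 * complex_of_real pi * \<i> * complex_of_real (t * v$a)) =
          exp (2 * complex_of_real pi * \<i> * complex_of_real (t * v$b))" by simp
      have "exp (2 * complex_of_real pi * \<i> * complex_of_real (t * v$a) - 2 * complex_of_real pi * \<i> * complex_of_real (t * v$b)) = 1"
        unfolding exp_diff eq by (simp add: exp_not_eq_zero)
      moreover have "2 * complex_of_real pi * \<i> * complex_of_real (t * v$a) - 2 * complex_of_real pi * \<i> * complex_of_real (t * v$b)
          = complex_of_real pi * \<i>"
      proof -
        have "t * v$a - t * v$b = t * (v$a - v$b)" by (simp add: right_diff_distrib)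
        also have "\<dots> = 1/2" unfolding t_def using d by simp
        finally have "t * v$a - t * v$b = 1/2" .
        then have "complex_of_real (t * v$a) - complex_of_real (t * v$b) = complex_of_real (1/2)"
          by (simp only: of_real_diff[symmetric])
        then have "complex_of_real (t * v$a) - complex_of_real (t * v$b) = 1/2" by simp
        then have "2 * complex_of_real pi * \<i> * complex_of_real (t * v$a) - 2 * complex_of_real pi * \<i> * complex_of_real (t * v$b)
          = 2 * complex_of_real pi * \<i> * (1/2)" by (simp only: right_diff_distrib[symmetric])
        then show ?thesis by simp
      qed
      ultimately show False by simp
    qed
  qed
  have subW: "subspace W" unfolding W_def subspace_def by auto
  have "span S \<subseteq> W" by (rule span_minimal[OF SW subW])
  moreover have "axis a (1::real) \<notin> W" unfolding W_def using ab(1) by (simp add: axis_def)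
  ultimately have "span S \<noteq> UNIV" by auto
  then have d1: "dim S \<noteq> DIM(real^'d)" using dim_eq_full[of S] by blast
  have d2: "DIM(real^'d) = CARD('d)" by (simp only: DIM_cart DIM_real mult_1_right)
  have "dim S \<noteq> CARD('d)" using d1 unfolding d2 .
  moreover have "dim S \<le> CARD('d)" by (rule dim_subset_UNIV_cart)
  ultimately have "dim S < CARD('d)" by linarith
  moreover have "lie_dim (fst ` Tset L) = dim S" unfolding lie_dim_def S_def by (rule refl)
  ultimately show ?thesis by (simp only:)
qed


definition pt :: "nat \<Rightarrow> ('d + 'd \<Rightarrow> nat) \<Rightarrow> (complex^'d) \<times> (complex^'d)" where
  "pt K e = mk (\<lambda>i. cis (2 * pi / real K) ^ e i)"

definition valid :: "('d + 'd \<Rightarrow> 'd + 'd) \<Rightarrow> nat \<Rightarrow> ('d + 'd \<Rightarrow> nat) \<Rightarrow> bool" where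
  "valid L K e \<longleftrightarrow> (\<forall>r. L r = r \<longrightarrow> (\<Sum>i\<in>{i. L i = r}. of_int (sg i) * cis (2 * pi / real K) ^ e i) = 0)"

lemma pt_tors:
  assumes K: "K > 0"
  shows "pt K e \<in> tors2"
  unfolding tors2_iff pt_def
proof (intro conjI allI exI[of _ K])
  fix i
  show "cmod (crd (mk (\<lambda>i. cis (2 * pi / real K) ^ e i)) i) = 1" by (simp add: norm_power)
  have "(cis (2 * pi / real K) ^ e i) ^ K = (cis (2 * pi / real K) ^ K) ^ e i"
    by (simp only: power_mult[symmetric] mult.commute)
  then show "crd (mk (\<lambda>i. cis (2 * pi / real K) ^ e i)) i ^ K = 1" using zeta_N[OF K] by simp
qed (use K in auto)

lemma coset_V:
  fixes L :: "'d::finite + 'd \<Rightarrow> 'd + 'd"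
  assumes L: "\<forall>i. L (L i) = L i" and v: "valid L K e"
  shows "coset2 (pt K e) (Tset L) \<subseteq> Vset"
proof
  fix x assume "x \<in> coset2 (pt K e) (Tset L)"
  then obtain y where y: "y \<in> Tset L" "x = mult2 (pt K e) y" unfolding coset2_def by blast
  define w where "w = cis (2 * pi / real K)"
  have cx: "crd x i = w ^ e i * crd y (L i)" for i
    using y unfolding Tset_def pt_def w_def by auto
  have "(\<Sum>i\<in>UNIV. of_int (sg i) * crd x i) = (\<Sum>i\<in>UNIV. of_int (sg i) * w ^ e i * crd y (L i))"
    unfolding cx by (simp add: mult.assoc)
  also have "\<dots> = (\<Sum>r\<in>L ` UNIV. \<Sum>i\<in>{i\<in>UNIV. L i = r}. of_int (sg i) * w ^ e i * crd y (L i))"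
    by (rule sum.image_gen) simp
  also have "\<dots> = (\<Sum>r\<in>L ` UNIV. crd y r * (\<Sum>i\<in>{i. L i = r}. of_int (sg i) * w ^ e i))"
    by (intro sum.cong refl) (auto simp: sum_distrib_left mult_ac intro!: sum.cong)
  also have "\<dots> = 0"
  proof (intro sum.neutral ballI)
    fix r assume "r \<in> L ` UNIV"
    then have "L r = r" using L by auto
    then show "crd y r * (\<Sum>i\<in>{i. L i = r}. of_int (sg i) * w ^ e i) = 0"
      using v unfolding valid_def w_def by simp
  qed
  finally show "x \<in> Vset" unfolding V_iff .
qed

lemma Tperm_V:
  assumes "\<sigma> permutes (UNIV :: 'd::finite set)"
  shows "Tperm \<sigma> \<subseteq> Vset"
proof
  fix x assume "x \<in> Tperm \<sigma>"
  then obtain z where x: "x = (z, \<chi> j. z $ (\<sigma> j))" unfolding Tperm_def by blast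
  have "(\<Sum>j\<in>UNIV. (\<chi> j. z $ (\<sigma> j)) $ j) = (\<Sum>j\<in>UNIV. z $ (\<sigma> j))" by simp
  also have "\<dots> = (\<Sum>j\<in>UNIV. z $ j)" using sum.permute[OF assms, of "\<lambda>j. z $ j"] by (simp add: comp_def)
  finally show "x \<in> Vset" unfolding Vset_def x by simp
qed

lemma decomp:
  fixes f :: "'i \<Rightarrow> complex"
  shows "finite U \<Longrightarrow> sum f U = 0 \<Longrightarrow> \<exists>P. (\<forall>B\<in>P. B \<subseteq> U \<and> B \<noteq> {} \<and> sum f B = 0 \<and>
      (\<forall>C. C \<subseteq> B \<longrightarrow> C \<noteq> {} \<longrightarrow> C \<noteq> B \<longrightarrow> sum f C \<noteq> 0)) \<and>
      (\<forall>B\<in>P. \<forall>B'\<in>P. B \<noteq> B' \<longrightarrow> B \<inter> B' = {}) \<and> \<Union>P = U"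
proof (induct "card U" arbitrary: U rule: less_induct)
  case less
  show ?case
  proof (cases "U = {}")
    case True then show ?thesis by (intro exI[of _ "{}"]) auto
  next
    case False
    define Q where "Q C \<longleftrightarrow> C \<subseteq> U \<and> C \<noteq> {} \<and> sum f C = 0" for C
    have "Q U" using False less(3) Q_def by simp
    then obtain C where C: "Q C" and Cmin: "\<forall>C'. Q C' \<longrightarrow> card C \<le> card C'"
      using ex_has_least_nat[of Q U card] by blast
    have finC: "finite C" using C less(2) Q_def finite_subset by blast
    have Cm: "\<forall>C'. C' \<subseteq> C \<longrightarrow> C' \<noteq> {} \<longrightarrow> C' \<noteq> C \<longrightarrow> sum f C' \<noteq> 0"
    proof (intro allI impI)
      fix C' assume h: "C' \<subseteq> C" "C' \<noteq> {}" "C' \<noteq> C"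
      show "sum f C' \<noteq> 0"
      proof
        assume "sum f C' = 0"
        then have "Q C'" using h C Q_def by auto
        then have "card C \<le> card C'" using Cmin by blast
        moreover have "card C' < card C" using h finC by (meson psubsetI psubset_card_mono)
        ultimately show False by simp
      qed
    qed
    have sUC: "sum f (U - C) = 0"
      using sum.subset_diff[of C U f] less(2) less(3) C Q_def by simp
    have lt: "card (U - C) < card U"
      using C Q_def less(2) by (metis card_Diff_subset card_gt_0_iff diff_less finC finite_subset subset_empty)
    obtain P where P: "\<forall>B\<in>P. B \<subseteq> U - C \<and> B \<noteq> {} \<and> sum f B = 0 \<and>
      (\<forall>C. C \<subseteq> B \<longrightarrow> C \<noteq> {} \<longrightarrow> C \<noteq> B \<longrightarrow> sum f C \<noteq> 0)"
      "\<forall>B\<in>P. \<forall>B'\<in>P. B \<noteq> B' \<longrightarrow> B \<inter> B' = {}" "\<Union>P = U - C"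
      using less(1)[OF lt _ sUC] less(2) by auto
    show ?thesis
    proof (intro exI[of _ "insert C P"] conjI)
      show "\<forall>B\<in>insert C P. B \<subseteq> U \<and> B \<noteq> {} \<and> sum f B = 0 \<and>
        (\<forall>Ca. Ca \<subseteq> B \<longrightarrow> Ca \<noteq> {} \<longrightarrow> Ca \<noteq> B \<longrightarrow> sum f Ca \<noteq> 0)"
        using P(1) C Cm Q_def by auto
      show "\<forall>B\<in>insert C P. \<forall>B'\<in>insert C P. B \<noteq> B' \<longrightarrow> B \<inter> B' = {}"
        using P(1,2) by blast
      show "\<Union>(insert C P) = U" using P(3) C Q_def by auto
    qed
  qed
qed


lemma cover:
  fixes x :: "(complex^'d::finite) \<times> (complex^'d)"
  assumes xt: "x \<in> tors2" and xv: "x \<in> Vset" and K: "K = fact (card (UNIV :: ('d+'d) set))"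
  shows "(\<exists>\<sigma>. \<sigma> permutes UNIV \<and> x \<in> Tperm \<sigma>) \<or>
     (\<exists>L e. (\<forall>i. L (L i) = L i) \<and> (\<forall>i. e i < K) \<and> valid L K e \<and>
        (\<exists>a b. a \<noteq> b \<and> L (Inl a) = L (Inl b)) \<and> x \<in> coset2 (pt K e) (Tset L))"
proof -
  define X where "X = crd x"
  have Xn: "\<forall>i. cmod (X i) = 1" using xt unfolding tors2_iff X_def by blast
  obtain n where n: "n > 0" "\<forall>i. X i ^ n = 1" using xt unfolding tors2_iff X_def by blast
  have X0: "X i \<noteq> 0" for i using Xn[rule_format, of i] by auto
  define f where "f i = of_int (sg i) * X i" for i
  have fsum: "sum f UNIV = 0" using xv unfolding V_iff f_def X_def .
  obtain P where P: "\<forall>B\<in>P. B \<subseteq> UNIV \<and> B \<noteq> {} \<and> sum f B = 0 \<and>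
      (\<forall>C. C \<subseteq> B \<longrightarrow> C \<noteq> {} \<longrightarrow> C \<noteq> B \<longrightarrow> sum f C \<noteq> 0)"
      "\<forall>B\<in>P. \<forall>B'\<in>P. B \<noteq> B' \<longrightarrow> B \<inter> B' = {}" "\<Union>P = UNIV"
    using decomp[of UNIV f] fsum by auto
  have ex: "\<exists>B. B \<in> P \<and> i \<in> B" for i
  proof -
    have "i \<in> \<Union>P" using P(3) by simp
    then show ?thesis by (simp only: Union_iff) blast
  qed
  define part where "part i = (SOME B. B \<in> P \<and> i \<in> B)" for i
  have partP: "part i \<in> P" and ipart: "i \<in> part i" for i
    using someI_ex[OF ex[of i]] unfolding part_def by auto
  have part_uniq: "part i = B" if "B \<in> P" "i \<in> B" for B i
  proof (rule ccontr)
    assume ne: "part i \<noteq> B"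
    have "part i \<inter> B = {}" using P(2)[rule_format, OF partP[of i] that(1) ne] .
    then show False using ipart[of i] that(2) by auto
  qed
  have part_eq: "part j = part i" if "j \<in> part i" for i j
    using part_uniq[OF partP[of i] that] .
  define L where "L i = (SOME r. r \<in> part i)" for i
  have Lin: "L i \<in> part i" for i unfolding L_def using ipart by (rule someI)
  have Lpart: "part (L i) = part i" for i by (rule part_eq[OF Lin])
  have LL: "L (L i) = L i" for i
  proof -
    have "L (L i) = (SOME r. r \<in> part (L i))" by (rule L_def)
    also have "\<dots> = (SOME r. r \<in> part i)" unfolding Lpart ..
    also have "\<dots> = L i" by (simp add: L_def)
    finally show ?thesis .
  qed
  have Leq: "L i = L j \<longleftrightarrow> part i = part j" for i j
  proof
    assume "L i = L j" then show "part i = part j" using Lpart[of i] Lpart[of j] by simp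
  next
    assume "part i = part j" then show "L i = L j" unfolding L_def by simp
  qed
  have fib: "{i. L i = r} = part r" if r: "L r = r" for r
  proof
    show "{i. L i = r} \<subseteq> part r"
    proof
      fix i assume "i \<in> {i. L i = r}"
      then have "L i = L r" using r by simp
      then have "part i = part r" using Leq by blast
      then show "i \<in> part r" using ipart[of i] by simp
    qed
  next
    show "part r \<subseteq> {i. L i = r}"
    proof
      fix i assume "i \<in> part r"
      then have "part i = part r" by (rule part_eq)
      then have "L i = L r" using Leq[of i r] by simp
      then show "i \<in> {i. L i = r}" using r by simp
    qed
  qed
  have pvan: "sum f (part i) = 0" for i using P(1) partP by blast
  have pmin: "\<forall>C. C \<subseteq> part i \<longrightarrow> C \<noteq> {} \<longrightarrow> C \<noteq> part i \<longrightarrow> sum f C \<noteq> 0" for i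
    using P(1) partP by blast
  have K0: "K > 0" using K by simp
  have ratio: "(X i / X (L i)) ^ K = 1" for i
  proof -
    have m: "\<forall>k\<in>part i. (X k / X (L i)) ^ fact (card (part i)) = 1"
      by (rule mann[of "part i" n X sg "L i"])
         (use n pvan[of i] pmin[of i] Lin[of i] in \<open>auto simp: f_def\<close>)
    have "card (part i) \<le> card (UNIV :: ('d+'d) set)" by (rule card_mono) auto
    then have "fact (card (part i)) dvd K" unfolding K by (rule fact_dvd)
    then obtain t where t: "K = fact (card (part i)) * t" by (rule dvdE)
    show ?thesis unfolding t power_mult using m ipart by simp
  qed
  define w where "w = cis (2 * pi / real K)"
  have "\<forall>i. \<exists>k. k < K \<and> X i / X (L i) = w ^ k" using root_rep[OF K0] ratio unfolding w_def by blast
  from choice[OF this] obtain e where e: "\<forall>i. e i < K \<and> X i / X (L i) = w ^ e i" by blast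
  have val: "valid L K e"
    unfolding valid_def
  proof (intro allI impI)
    fix r assume r: "L r = r"
    have "(\<Sum>i\<in>{i. L i = r}. of_int (sg i) * cis (2 * pi / real K) ^ e i) =
        (\<Sum>i\<in>part r. f i / X r)"
      unfolding fib[OF r] w_def[symmetric]
    proof (intro sum.cong refl)
      fix i assume i: "i \<in> part r"
      then have "L i = r" using fib[OF r] by blast
      moreover have "X i / X (L i) = w ^ e i" using e by blast
      ultimately have "w ^ e i = X i / X r" by simp
      then show "of_int (sg i) * w ^ e i = f i / X r" unfolding f_def by simp
    qed
    also have "\<dots> = sum f (part r) / X r" by (simp add: sum_divide_distrib)
    also have "\<dots> = 0" using pvan by simp
    finally show "(\<Sum>i\<in>{i. L i = r}. of_int (sg i) * cis (2 * pi / real K) ^ e i) = 0" .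
  qed
  define y where "y = mk (\<lambda>i. X (L i))"
  have yT: "y \<in> Tset L" unfolding Tset_def torus2_iff y_def using Xn LL by simp
  have xy: "x = mult2 (pt K e) y"
    unfolding crd_inj
  proof
    fix i
    have "crd (mult2 (pt K e) y) i = w ^ e i * X (L i)" unfolding y_def pt_def w_def by simp
    also have "\<dots> = X i"
    proof -
      have "w ^ e i = X i / X (L i)" using e by (simp only:)
      then show ?thesis using X0[of "L i"] by simp
    qed
    finally show "crd x i = crd (mult2 (pt K e) y) i" unfolding X_def by simp
  qed
  have xc: "x \<in> coset2 (pt K e) (Tset L)" unfolding coset2_def using xy yT by blast
  show ?thesis
  proof (cases "\<exists>a b. a \<noteq> b \<and> L (Inl a) = L (Inl b)")
    case True
    then show ?thesis using LL e val xc by blast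
  next
    case False
    then have injL: "a = b" if "L (Inl a) = L (Inl b)" for a b using that by blast
    have exb: "\<exists>b. Inr b \<in> part (Inl a)" for a
    proof (rule ccontr)
      assume nb: "\<not> ?thesis"
      have "part (Inl a) = {Inl a}"
      proof
        show "{Inl a} \<subseteq> part (Inl a)" using ipart by simp
        show "part (Inl a) \<subseteq> {Inl a}"
        proof
          fix k assume k: "k \<in> part (Inl a)"
          show "k \<in> {Inl a}"
          proof (cases k)
            case (Inl a')
            then have "part (Inl a') = part (Inl a)" using part_eq k by simp
            then have "a' = a" using Leq injL by blast
            then show ?thesis using Inl by simp
          next
            case (Inr b) then show ?thesis using nb k by blast
          qed
        qed
      qed
      then have "f (Inl a) = 0" using pvan[of "Inl a"] by simp
      then show False using X0 unfolding f_def by simp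
    qed
    define g where "g a = (SOME b. Inr b \<in> part (Inl a))" for a
    have gin: "Inr (g a) \<in> part (Inl a)" for a unfolding g_def using exb by (rule someI_ex)
    have ginj: "inj g"
    proof (rule injI)
      fix a a' assume "g a = g a'"
      then have "part (Inl a) = part (Inl a')"
        using part_eq[OF gin[of a]] part_eq[OF gin[of a']] by simp
      then show "a = a'" using Leq injL by blast
    qed
    have gsurj: "surj g" using ginj by (simp add: finite_UNIV_inj_surj)
    have pa: "part (Inl a) = {Inl a, Inr (g a)}" for a
    proof
      show "{Inl a, Inr (g a)} \<subseteq> part (Inl a)" using ipart gin by simp
      show "part (Inl a) \<subseteq> {Inl a, Inr (g a)}"
      proof
        fix k assume k: "k \<in> part (Inl a)"
        show "k \<in> {Inl a, Inr (g a)}"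
        proof (cases k)
          case (Inl a')
          then have "part (Inl a') = part (Inl a)" using part_eq k by simp
          then have "a' = a" using Leq injL by blast
          then show ?thesis using Inl by simp
        next
          case (Inr b)
          obtain a'' where b: "b = g a''" using gsurj unfolding surj_def by blast
          have "part (Inr b) = part (Inl a)" using part_eq k Inr by simp
          moreover have "part (Inr b) = part (Inl a'')" using part_eq[OF gin[of a'']] b by simp
          ultimately have "part (Inl a'') = part (Inl a)" by simp
          then have "a'' = a" using Leq injL by blast
          then show ?thesis using Inr b by simp
        qed
      qed
    qed
    have wa: "snd x $ g a = fst x $ a" for a
    proof -
      have "sum f {Inl a, Inr (g a)} = 0" using pvan[of "Inl a"] pa by simp
      then show ?thesis unfolding f_def X_def by simp
    qed
    define \<sigma> where "\<sigma> = inv g"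
    have gperm: "g permutes UNIV" using ginj gsurj by (intro bij_imp_permutes) (auto simp: bij_def)
    have sp: "\<sigma> permutes UNIV" unfolding \<sigma>_def by (rule permutes_inv[OF gperm])
    have "x = (fst x, \<chi> j. fst x $ \<sigma> j)"
    proof -
      have "snd x $ j = fst x $ \<sigma> j" for j
        using wa[of "\<sigma> j"] surj_f_inv_f[OF gsurj, of j] unfolding \<sigma>_def by simp
      then have "snd x = (\<chi> j. fst x $ \<sigma> j)" by (simp add: vec_eq_iff)
      then show ?thesis by (simp add: prod_eq_iff)
    qed
    moreover have "fst x \<in> torus" using xt unfolding tors2_def torus2_def by auto
    ultimately have "x \<in> Tperm \<sigma>" unfolding Tperm_def by blast
    then show ?thesis using sp by blast
  qed
qed


theorem lemma4p4:
  shows "\<exists>(m::nat) (T :: nat \<Rightarrow> ((complex^'d::finite) \<times> (complex^'d)) set) p.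
     (\<forall>j<m. closed_connected_subgroup2 (T j) \<and> lie_dim (fst ` T j) < CARD('d)) \<and>
     (\<forall>j<m. p j \<in> tors2) \<and>
     tors2 \<inter> Vset =
       (\<Union>\<sigma>\<in>{\<sigma>. \<sigma> permutes (UNIV :: 'd set)}. tors2 \<inter> Tperm \<sigma>) \<union>
       (\<Union>j<m. tors2 \<inter> coset2 (p j) (T j))"
proof -
  define K :: nat where "K = fact (card (UNIV :: ('d+'d) set))"
  have K0: "K > 0" unfolding K_def by simp
  define D :: "(('d+'d \<Rightarrow> 'd+'d) \<times> ('d+'d \<Rightarrow> nat)) set" where
    "D = {(L, e). (\<forall>i. L (L i) = L i) \<and> (\<forall>i. e i < K) \<and> valid L K e \<and> (\<exists>a b. a \<noteq> b \<and> L (Inl a) = L (Inl b))}"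
  have "D \<subseteq> UNIV \<times> (Pi\<^sub>E UNIV (\<lambda>_. {..<K}))" unfolding D_def PiE_UNIV_domain by auto
  moreover have "finite ((UNIV :: ('d+'d \<Rightarrow> 'd+'d) set) \<times> (Pi\<^sub>E (UNIV :: ('d+'d) set) (\<lambda>_. {..<K})))"
    by (intro finite_cartesian_product finite_PiE) (auto intro: finite)
  ultimately have finD: "finite D" by (rule finite_subset)
  obtain m :: nat and g where mg: "D = g ` {i. i < m}" using finite_imp_nat_seg_image_inj_on[OF finD] by blast
  have gD: "g j \<in> D" if "j < m" for j using mg that by blast
  show ?thesis
  proof (intro exI[of _ m] exI[of _ "\<lambda>j. Tset (fst (g j))"] exI[of _ "\<lambda>j. pt K (snd (g j))"] conjI allI impI)
    fix j assume j: "j < m"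
    obtain L e where ge: "g j = (L, e)" by (cases "g j")
    have LD: "(L, e) \<in> D" using gD[OF j] ge by simp
    then have L: "\<forall>i. L (L i) = L i" and ab: "\<exists>a b. a \<noteq> b \<and> L (Inl a) = L (Inl b)" unfolding D_def by auto
    show "closed_connected_subgroup2 (Tset (fst (g j)))" using ccs_Tset[OF L] ge by simp
    show "lie_dim (fst ` Tset (fst (g j))) < CARD('d)" using lie_dim_Tset ab ge by fastforce
  next
    fix j assume j: "j < m"
    show "pt K (snd (g j)) \<in> tors2" by (rule pt_tors[OF K0])
  next
    show "tors2 \<inter> Vset = (\<Union>\<sigma>\<in>{\<sigma>. \<sigma> permutes (UNIV :: 'd set)}. tors2 \<inter> Tperm \<sigma>) \<union>
       (\<Union>j<m. tors2 \<inter> coset2 (pt K (snd (g j))) (Tset (fst (g j))))"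
    proof (intro equalityI subsetI)
      fix x :: "(complex^'d) \<times> (complex^'d)" assume x: "x \<in> tors2 \<inter> Vset"
      have xt: "x \<in> tors2" and xv: "x \<in> Vset" using x by auto
      from cover[OF xt xv K_def]
      consider "\<exists>\<sigma>. \<sigma> permutes UNIV \<and> x \<in> Tperm \<sigma>"
        | "\<exists>L e. (\<forall>i. L (L i) = L i) \<and> (\<forall>i. e i < K) \<and> valid L K e \<and>
            (\<exists>a b. a \<noteq> b \<and> L (Inl a) = L (Inl b)) \<and> x \<in> coset2 (pt K e) (Tset L)" by blast
      then show "x \<in> (\<Union>\<sigma>\<in>{\<sigma>. \<sigma> permutes (UNIV :: 'd set)}. tors2 \<inter> Tperm \<sigma>) \<union>
       (\<Union>j<m. tors2 \<inter> coset2 (pt K (snd (g j))) (Tset (fst (g j))))"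
      proof cases
        case 1 then show ?thesis using x by blast
      next
        case 2
        then obtain L e where Le: "(L, e) \<in> D" "x \<in> coset2 (pt K e) (Tset L)" unfolding D_def by blast
        then obtain j where j: "j < m" "g j = (L, e)" using mg by (metis (mono_tags, lifting) imageE mem_Collect_eq)
        then show ?thesis using x Le(2) by force
      qed
    next
      fix x :: "(complex^'d) \<times> (complex^'d)" assume x: "x \<in> (\<Union>\<sigma>\<in>{\<sigma>. \<sigma> permutes (UNIV :: 'd set)}. tors2 \<inter> Tperm \<sigma>) \<union>
       (\<Union>j<m. tors2 \<inter> coset2 (pt K (snd (g j))) (Tset (fst (g j))))"
      then show "x \<in> tors2 \<inter> Vset"
      proof
        assume "x \<in> (\<Union>\<sigma>\<in>{\<sigma>. \<sigma> permutes (UNIV :: 'd set)}. tors2 \<inter> Tperm \<sigma>)"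
        then obtain \<sigma> where "\<sigma> permutes (UNIV :: 'd set)" "x \<in> tors2" "x \<in> Tperm \<sigma>" by blast
        then show ?thesis using Tperm_V by blast
      next
        assume "x \<in> (\<Union>j<m. tors2 \<inter> coset2 (pt K (snd (g j))) (Tset (fst (g j))))"
        then obtain j where j: "j < m" "x \<in> tors2" "x \<in> coset2 (pt K (snd (g j))) (Tset (fst (g j)))" by blast
        obtain L e where ge: "g j = (L, e)" by (cases "g j")
        have "(L, e) \<in> D" using gD[OF j(1)] ge by simp
        then have L: "\<forall>i. L (L i) = L i" and v: "valid L K e" unfolding D_def by auto
        have "x \<in> Vset" using coset_V[OF L v] j(3) ge by auto
        then show ?thesis using j(2) by blast
      qed
    qed
  qed
qed


end
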